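(* Let $d\ge 2$ and let $\triangle=\mathrm{conv}(v_0,\dots,v_d)\subset B_2^d$ be a simplex that maximizes the mean width $w(\cdot)$ over all simplices contained in $B_2^d$. Then: (a) $B_2^d$ is the smallest ball containing $\triangle$; (b) $v_i\in\mathbb{S}^{d-1}$ for all $0\le i\le d$, i.e. $\mathbb{S}^{d-1}$ is the circumsphere of $\triangle$; (c) the closed hemispheres $\{u\in\mathbb{S}^{d-1}: u\cdot v_i\ge 0\}$, $0\le i\le d$, cover $\mathbb{S}^{d-1}$.
   Context: $B_2^d\subset\mathbb{R}^d$ is the closed Euclidean unit ball and $\mathbb{S}^{d-1}=\partial B_2^d$; $\mu$ is the uniform probability measure on $\mathbb{S}^{d-1}$. For a convex body $K\subset B_2^d$, its support function is $h_K(u)=\max_{x\in K}u\cdot x$ and its mean width is $w(K)=2\int_{\mathbb{S}^{d-1}}h_K(u)\,d\mu(u)$. *)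

theory Defs
  imports "HOL-Analysis.Analysis"
begin

text \<open>Uniform probability measure on the unit sphere, realised (as a measure on the
  Borel sets of the whole space, concentrated on the sphere) as the image of the
  normalised Lebesgue measure on the unit ball under radial projection x \<mapsto> x / |x|.\<close>
definition sphere_measure :: "'a::euclidean_space measure" where
  "sphere_measure = distr (uniform_measure lborel (cball 0 1)) borel (\<lambda>x. x /\<^sub>R norm x)"

definition support_fun :: "'a::euclidean_space set \<Rightarrow> 'a \<Rightarrow> real" where
  "support_fun K u = (SUP x\<in>K. u \<bullet> x)"

definition mean_width :: "'a::euclidean_space set \<Rightarrow> real" where
  "mean_width K = 2 * (\<integral>u. support_fun K u \<partial>sphere_measure)"

end

theory Submission
  imports Defs "HOL-Probability.Probability"
begin

abbreviation ballM :: "'a::euclidean_space measure" where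
  "ballM \<equiv> uniform_measure lborel (cball 0 1)"

lemma sph_meas: "(\<lambda>x::'a::euclidean_space. x /\<^sub>R norm x) \<in> borel_measurable borel"
  by measurable

lemma cball_fin: "emeasure lborel (cball (0::'a::euclidean_space) 1) \<noteq> \<infinity>"
  using emeasure_lborel_cball_finite by (metis less_irrefl top.extremum_strict infinity_ennreal_def)

lemma cball_nz: "emeasure lborel (cball (0::'a::euclidean_space) 1) \<noteq> 0"
proof -
  have "measure lborel (cball (0::'a) 1) > 0" using content_cball_pos[of 1 "0::'a"] by simp
  thus ?thesis using cball_fin
    by (metis emeasure_eq_ennreal_measure ennreal_0 less_irrefl infinity_ennreal_def measure_def enn2real_0)
qed

lemma ballM_prob: "prob_space (ballM :: 'a::euclidean_space measure)"
  by (rule prob_space_uniform_measure[OF cball_nz cball_fin])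

lemma sphere_prob: "prob_space (sphere_measure :: 'a::euclidean_space measure)"
  unfolding sphere_measure_def
  by (rule prob_space.prob_space_distr[OF ballM_prob]) (simp add: sph_meas)

lemma lborel_neg: "distr lborel borel (uminus::'a::euclidean_space \<Rightarrow> 'a) = lborel"
proof -
  have "lborel = density (distr lborel borel (\<lambda>x::'a. 0 + (-1) *\<^sub>R x)) (\<lambda>_. \<bar>-1::real\<bar>^DIM('a))"
    by (rule lborel_affine) simp
  thus ?thesis by (simp add: density_1)
qed

lemma ballM_neg: "distr ballM borel (uminus::'a::euclidean_space \<Rightarrow> 'a) = ballM"
proof (rule measure_eqI)
  show "sets (distr ballM borel (uminus::'a \<Rightarrow> 'a)) = sets ballM" by simp
next
  fix A :: "'a set" assume "A \<in> sets (distr ballM borel uminus)"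
  hence A: "A \<in> sets borel" by simp
  have e: "emeasure lborel (uminus -` S) = emeasure lborel S" if "S \<in> sets borel" for S :: "'a set"
  proof -
    have "emeasure lborel S = emeasure (distr lborel borel (uminus::'a\<Rightarrow>'a)) S" by (simp add: lborel_neg)
    also have "\<dots> = emeasure lborel (uminus -` S)" using that by (simp add: emeasure_distr)
    finally show ?thesis by simp
  qed
  have "cball 0 1 \<inter> uminus -` A = uminus -` (cball (0::'a) 1 \<inter> A)" by auto
  moreover have "uminus -` A \<in> sets borel" using measurable_sets[OF _ A, of uminus borel] by simp
  moreover have "cball 0 1 \<inter> A \<in> sets borel" using A by simp
  ultimately show "emeasure (distr ballM borel uminus) A = emeasure ballM A"
    using A e[of "cball 0 1 \<inter> A"] by (simp add: emeasure_distr del: vimage_Int)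
qed

definition hmax :: "'a::euclidean_space set \<Rightarrow> 'a \<Rightarrow> real" where
  "hmax V u = Max ((\<lambda>v. u \<bullet> v) ` V)"

lemma hull_le:
  fixes V :: "'a::euclidean_space set"
  assumes "finite V" "y \<in> convex hull V"
  shows "u \<bullet> y \<le> hmax V u"
proof -
  have "V \<subseteq> {x. u \<bullet> x \<le> hmax V u}" using assms by (auto simp: hmax_def)
  hence "convex hull V \<subseteq> {x. u \<bullet> x \<le> hmax V u}" by (intro hull_minimal convex_halfspace_le)
  thus ?thesis using assms by auto
qed

lemma hmax_attained:
  fixes V :: "'a::euclidean_space set"
  assumes "finite V" "V \<noteq> {}"
  obtains v where "v \<in> V" "hmax V u = u \<bullet> v"
proof -
  have "Max ((\<lambda>v. u \<bullet> v) ` V) \<in> (\<lambda>v. u \<bullet> v) ` V" using assms by (intro Max_in) auto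
  thus thesis using that unfolding hmax_def by blast
qed

lemma support_hull:
  fixes V :: "'a::euclidean_space set"
  assumes "finite V" "V \<noteq> {}"
  shows "support_fun (convex hull V) u = hmax V u"
proof -
  obtain v where v: "v \<in> V" "hmax V u = u \<bullet> v" using hmax_attained assms by blast
  have vh: "v \<in> convex hull V" using v hull_inc by metis
  have ne: "convex hull V \<noteq> {}" using assms by simp
  show ?thesis unfolding support_fun_def
  proof (rule antisym)
    show "(SUP x\<in>(convex hull V). u \<bullet> x) \<le> hmax V u" by (rule cSUP_least[OF ne hull_le[OF assms(1)]])
    have "bdd_above ((\<lambda>x. u \<bullet> x) ` (convex hull V))" by (rule bdd_aboveI2[where M="hmax V u"]) (rule hull_le[OF assms(1)])
    thus "hmax V u \<le> (SUP x\<in>(convex hull V). u \<bullet> x)" using v vh by (metis cSUP_upper)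
  qed
qed

lemma hmax_meas: "finite V \<Longrightarrow> hmax V \<in> borel_measurable borel"
  unfolding hmax_def by measurable

lemma hmax_bound:
  fixes V :: "'a::euclidean_space set"
  assumes "finite V" "V \<noteq> {}" "norm u \<le> 1"
  shows "\<bar>hmax V u\<bar> \<le> (\<Sum>v\<in>V. norm v)"
proof -
  obtain v where v: "v \<in> V" "hmax V u = u \<bullet> v" using hmax_attained assms by blast
  have "\<bar>u \<bullet> v\<bar> \<le> norm u * norm v" by (rule Cauchy_Schwarz_ineq2)
  also have "\<dots> \<le> norm v" using assms(3) by (simp add: mult_left_le_one_le)
  also have "\<dots> \<le> (\<Sum>v\<in>V. norm v)" using v assms by (intro member_le_sum) auto
  finally show ?thesis using v by simp
qed

lemma norm_sph: "norm (x /\<^sub>R norm x) \<le> 1"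
  by (cases "x = 0") auto

lemma sphere_integrable:
  fixes g :: "'a::euclidean_space \<Rightarrow> real"
  assumes g: "g \<in> borel_measurable borel" and bnd: "\<And>u. norm u \<le> 1 \<Longrightarrow> \<bar>g u\<bar> \<le> B"
  shows "integrable sphere_measure g"
proof -
  interpret prob_space "ballM :: 'a measure" by (rule ballM_prob)
  show ?thesis unfolding sphere_measure_def
    apply (subst integrable_distr_eq[OF _ g])
     apply (simp add: sph_meas)
    apply (rule integrable_const_bound[where B=B])
     apply (rule AE_I2) using bnd[OF norm_sph] apply simp
    using measurable_compose[OF sph_meas g] by (simp add: measurable_cong_sets[OF sets_uniform_measure refl])
qed

lemma hmax_integrable:
  fixes V :: "'a::euclidean_space set"
  assumes "finite V" "V \<noteq> {}"
  shows "integrable sphere_measure (hmax V)"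
  using sphere_integrable[OF hmax_meas[OF assms(1)] hmax_bound[OF assms]] .

lemma lin_integrable: "integrable sphere_measure (\<lambda>u::'a::euclidean_space. u \<bullet> t)"
proof (rule sphere_integrable[where B="norm t"])
  show "(\<lambda>u::'a. u \<bullet> t) \<in> borel_measurable borel" by measurable
  fix u :: 'a assume "norm u \<le> 1"
  hence "\<bar>u \<bullet> t\<bar> \<le> norm u * norm t" "norm u * norm t \<le> norm t"
    by (auto simp: Cauchy_Schwarz_ineq2 mult_left_le_one_le)
  thus "\<bar>u \<bullet> t\<bar> \<le> norm t" by linarith
qed

lemma lin_zero: "(\<integral>u. u \<bullet> t \<partial>(sphere_measure :: 'a::euclidean_space measure)) = 0"
proof -
  let ?f = "\<lambda>x::'a. x /\<^sub>R norm x"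
  have m: "(\<lambda>u::'a. u \<bullet> t) \<in> borel_measurable borel" by measurable
  have "(\<integral>u. u \<bullet> t \<partial>(sphere_measure :: 'a measure)) = (\<integral>x. ?f x \<bullet> t \<partial>ballM)"
    unfolding sphere_measure_def by (rule integral_distr[OF _ m]) (simp add: sph_meas)
  also have "\<dots> = (\<integral>x. ?f x \<bullet> t \<partial>(distr ballM borel uminus))" by (simp add: ballM_neg)
  also have "\<dots> = (\<integral>x. ?f (-x) \<bullet> t \<partial>ballM)"
    by (rule integral_distr) (simp_all add: measurable_cong_sets[OF sets_uniform_measure refl] measurable_compose[OF sph_meas m, simplified o_def])
  also have "\<dots> = - (\<integral>x. ?f x \<bullet> t \<partial>ballM)" by simp
  finally show ?thesis
    using \<open>(\<integral>u. u \<bullet> t \<partial>sphere_measure) = _\<close> by linarith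
qed

lemma mw_hull:
  fixes V :: "'a::euclidean_space set"
  assumes "finite V" "V \<noteq> {}"
  shows "mean_width (convex hull V) = 2 * (\<integral>u. hmax V u \<partial>sphere_measure)"
proof -
  have "support_fun (convex hull V) = hmax V" using support_hull[OF assms] by (rule ext)
  thus ?thesis unfolding mean_width_def by simp
qed

lemma mw_translate:
  fixes V :: "'a::euclidean_space set"
  assumes "finite V" "V \<noteq> {}"
  shows "mean_width (convex hull ((\<lambda>v. a + v) ` V)) = mean_width (convex hull V)"
proof -
  have h: "hmax ((\<lambda>v. a + v) ` V) u = hmax V u + u \<bullet> a" for u
    unfolding hmax_def image_image inner_add_right using Max_add_commute[OF assms, of "\<lambda>x. u \<bullet> x" "u \<bullet> a"] by (simp add: add.commute)
  have "mean_width (convex hull ((\<lambda>v. a + v) ` V)) = 2 * (\<integral>u. hmax V u + u \<bullet> a \<partial>sphere_measure)"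
  proof -
    have e: "hmax ((\<lambda>v. a + v) ` V) = (\<lambda>u. hmax V u + u \<bullet> a)" by (rule ext, rule h)
    show ?thesis using mw_hull[of "(\<lambda>v. a + v) ` V"] assms by (simp add: e)
  qed
  also have "\<dots> = 2 * ((\<integral>u. hmax V u \<partial>sphere_measure) + (\<integral>u. u \<bullet> a \<partial>sphere_measure))"
    by (subst Bochner_Integration.integral_add) (auto intro: hmax_integrable[OF assms] lin_integrable)
  also have "\<dots> = mean_width (convex hull V)" using mw_hull[OF assms] lin_zero by simp
  finally show ?thesis .
qed

lemma sphere_pos:
  fixes U :: "'a::euclidean_space set"
  assumes "open U" "p \<in> U" "norm p < 1" "0 \<notin> U"
    and cone: "\<And>x c. x \<in> U \<Longrightarrow> c > 0 \<Longrightarrow> c *\<^sub>R x \<in> U"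
  shows "emeasure sphere_measure U \<noteq> 0"
proof -
  let ?f = "\<lambda>x::'a. x /\<^sub>R norm x"
  have Ub: "U \<in> sets borel" using assms(1) by simp
  have "open (U \<inter> ball 0 1)" using assms(1) by auto
  moreover have "p \<in> U \<inter> ball 0 1" using assms by auto
  ultimately obtain e where e: "e > 0" "ball p e \<subseteq> U \<inter> ball 0 1"
    by (meson openE)
  have sub: "U \<inter> ball 0 1 \<subseteq> ?f -` U"
  proof
    fix x assume x: "x \<in> U \<inter> ball 0 1"
    hence "x \<noteq> 0" using assms(4) by auto
    hence "?f x \<in> U" using cone[of x "inverse (norm x)"] x by auto
    thus "x \<in> ?f -` U" by simp
  qed
  have fU: "?f -` U \<in> sets borel" using measurable_sets[OF sph_meas Ub] by simp
  have "measure lborel (ball p e) > 0" using content_ball_pos[OF e(1), of p] by simp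
  hence "emeasure lborel (ball p e) \<noteq> 0"
    by (metis emeasure_eq_ennreal_measure emeasure_lborel_ball_finite ennreal_0 less_irrefl
        infinity_ennreal_def measure_def enn2real_0 top.not_eq_extremum)
  moreover have "emeasure lborel (ball p e) \<le> emeasure lborel (cball 0 1 \<inter> ?f -` U)"
    using e sub fU by (intro emeasure_mono) auto
  ultimately have "emeasure lborel (cball 0 1 \<inter> ?f -` U) \<noteq> 0" by (metis le_zero_eq)
  hence "emeasure (ballM :: 'a measure) (?f -` U) \<noteq> 0"
    using fU cball_fin by (simp add: ennreal_divide_eq_top_iff)
  thus ?thesis unfolding sphere_measure_def using Ub sph_meas
    by (subst emeasure_distr) auto
qed

lemma improve:
  fixes W :: "'a::euclidean_space set"
  assumes indep: "\<not> affine_dependent W" and cardW: "card W = DIM('a) + 1"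
    and inb: "convex hull W \<subseteq> cball 0 1" and w0: "w0 \<in> W" "norm w0 < 1"
  shows "\<exists>T :: 'a set. int DIM('a) simplex T \<and> T \<subseteq> cball 0 1 \<and> mean_width (convex hull W) < mean_width T"
proof -
  have finW: "finite W" using cardW card.infinite by fastforce
  define R where "R = W - {w0}"
  have finR: "finite R" using finW R_def by simp
  have cardR: "card R = DIM('a)" using cardW w0 finW by (simp add: R_def card_Diff_singleton)
  hence "R \<noteq> {}" by auto
  then obtain r where r: "r \<in> R" by auto
  have WR: "W = insert w0 R" using w0 R_def by auto
  have "w0 \<notin> affine hull R" using indep w0 unfolding affine_dependent_def R_def by auto
  hence "w0 \<notin> convex hull R" using convex_hull_subset_affine_hull by blast
  moreover have "closed (convex hull R)" using finR by (simp add: compact_imp_closed finite_imp_compact_convex_hull)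
  ultimately obtain a b where ab: "a \<bullet> w0 < b" "\<forall>x\<in>convex hull R. b < a \<bullet> x"
    using separating_hyperplane_closed_point[of "convex hull R" w0] by auto
  define u0 where "u0 = - a"
  have u0: "u0 \<bullet> v < u0 \<bullet> w0" if "v \<in> R" for v
    using ab that hull_inc[of v R] by (force simp: u0_def)
  have "u0 \<noteq> 0" using u0[OF r] by auto
  define U where "U = {u. \<forall>v\<in>R. u \<bullet> v < u \<bullet> w0}"
  have Ueq: "U = (\<Inter>v\<in>R. {u. u \<bullet> v < u \<bullet> w0})" unfolding U_def by auto
  have "open U" unfolding Ueq
    by (intro open_INT finR ballI open_Collect_less continuous_intros)
  define p where "p = (1 / (2 * norm u0)) *\<^sub>R u0"
  have pU: "p \<in> U" using u0 \<open>u0 \<noteq> 0\<close> unfolding U_def p_def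
    by (auto simp: divide_strict_right_mono)
  have pn: "norm p < 1" using \<open>u0 \<noteq> 0\<close> by (simp add: p_def)
  have "0 \<notin> U" using r by (auto simp: U_def)
  have cone: "c *\<^sub>R x \<in> U" if "x \<in> U" "c > 0" for x c
    using that by (auto simp: U_def)
  have posU: "emeasure sphere_measure U \<noteq> 0"
    by (rule sphere_pos[OF \<open>open U\<close> pU pn \<open>0 \<notin> U\<close> cone])
  define s where "s = (1 - norm w0) / (norm (w0 - r) + 1)"
  have s0: "s > 0" unfolding s_def using w0 by (intro divide_pos_pos) (auto simp: add_nonneg_pos)
  have sle: "s * norm (w0 - r) \<le> 1 - norm w0"
  proof -
    have "s * norm (w0 - r) \<le> s * (norm (w0 - r) + 1)" using s0 by simp
    also have "\<dots> = 1 - norm w0" unfolding s_def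
      by (metis add_nonneg_pos norm_ge_zero zero_less_one nonzero_divide_eq_eq order_less_irrefl)
    finally show ?thesis .
  qed
  define w' where "w' = w0 + s *\<^sub>R (w0 - r)"
  have nw': "norm w' \<le> 1"
  proof -
    have "norm w' \<le> norm w0 + norm (s *\<^sub>R (w0 - r))" unfolding w'_def by (rule norm_triangle_ineq)
    also have "\<dots> = norm w0 + s * norm (w0 - r)" using s0 by simp
    finally show ?thesis using sle by linarith
  qed
  define W' where "W' = insert w' R"
  have finW': "finite W'" using finR W'_def by simp
  have "w0 = (1 / (1 + s)) *\<^sub>R w' + (s / (1 + s)) *\<^sub>R r"
  proof -
    have "(1 + s) *\<^sub>R w0 = w' + s *\<^sub>R r" by (simp add: w'_def algebra_simps)
    hence "w0 = (1 / (1 + s)) *\<^sub>R (w' + s *\<^sub>R r)" using s0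
      by (metis (no_types, lifting) add_pos_pos less_numeral_extra(1) order_less_irrefl
          scaleR_one scaleR_scaleR nonzero_divide_eq_eq mult.commute divide_self_if)
    thus ?thesis by (simp add: scaleR_add_right)
  qed
  moreover have "w' \<in> convex hull W'" "r \<in> convex hull W'" using r by (auto simp: W'_def hull_inc)
  ultimately have w0h: "w0 \<in> convex hull W'" using s0
    by (metis convexD convex_convex_hull add_divide_distrib add_pos_pos divide_self_if
        less_numeral_extra(1) order_less_irrefl less_eq_real_def divide_nonneg_pos zero_less_one)
  have WsubW': "W \<subseteq> convex hull W'" using w0h WR by (auto simp: W'_def hull_inc)
  have hullsub: "convex hull W \<subseteq> convex hull W'"
    using WsubW' by (intro hull_minimal convex_convex_hull)
  have affW: "aff_dim W = int DIM('a)" using indep cardW unfolding affine_independent_iff_card by simp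
  have "aff_dim W \<le> aff_dim W'"
  proof -
    have "W \<subseteq> affine hull W'" using WsubW' convex_hull_subset_affine_hull by blast
    hence "aff_dim W \<le> aff_dim (affine hull W')" by (rule aff_dim_subset)
    thus ?thesis by simp
  qed
  moreover have "aff_dim W' \<le> int (card W') - 1" using aff_dim_le_card[OF finW'] by simp
  moreover have "card W' \<le> DIM('a) + 1" unfolding W'_def
    using card_insert_le_m1[of "DIM('a) + 1" R w'] finR cardR by simp
  ultimately have cW': "card W' = DIM('a) + 1" and adW': "aff_dim W' = int (card W') - 1"
    using affW by linarith+
  have indep': "\<not> affine_dependent W'" unfolding affine_independent_iff_card using finW' adW' by simp
  define T where "T = convex hull W'"
  have simpT: "int DIM('a) simplex T"
    unfolding simplex_def T_def using indep' cW' by auto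
  have "W' \<subseteq> cball 0 1" using nw' inb WR hull_inc[of _ W] by (auto simp: W'_def)
  hence Tb: "T \<subseteq> cball 0 1" unfolding T_def by (intro hull_minimal convex_cball)
  have neW: "W \<noteq> {}" using w0 by auto
  have neW': "W' \<noteq> {}" by (simp add: W'_def)
  interpret fm: prob_space "sphere_measure :: 'a measure" by (rule sphere_prob)
  have "(\<integral>u. hmax W u \<partial>sphere_measure) < (\<integral>u. hmax W' u \<partial>sphere_measure)"
  proof (rule fm.integral_less_AE[OF hmax_integrable[OF finW neW] hmax_integrable[OF finW' neW'] posU])
    show "U \<in> sets sphere_measure" using \<open>open U\<close> by (simp add: sphere_measure_def)
    show "AE x in sphere_measure. x \<in> U \<longrightarrow> hmax W x \<noteq> hmax W' x"
    proof (rule AE_I2, rule impI)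
      fix x assume xU: "x \<in> U"
      have "hmax W x \<le> x \<bullet> w0" unfolding hmax_def using finW neW xU WR
        by (auto simp: U_def less_imp_le)
      moreover have "x \<bullet> w' \<le> hmax W' x" using finW' by (intro hull_le) (auto simp: W'_def hull_inc)
      moreover have "x \<bullet> w0 < x \<bullet> w'"
      proof -
        have "x \<bullet> r < x \<bullet> w0" using xU r by (auto simp: U_def)
        hence "0 < s * (x \<bullet> (w0 - r))" using s0 by (simp add: inner_diff_right)
        thus ?thesis by (simp add: w'_def inner_add_right)
      qed
      ultimately show "hmax W x \<noteq> hmax W' x" by linarith
    qed
    show "AE x in sphere_measure. hmax W x \<le> hmax W' x"
    proof (rule AE_I2)
      fix x
      obtain v where v: "v \<in> W" "hmax W x = x \<bullet> v" using hmax_attained[OF finW neW] by blast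
      show "hmax W x \<le> hmax W' x" using v WsubW' hull_le[OF finW'] by auto
    qed
  qed
  hence "mean_width (convex hull W) < mean_width T"
    unfolding T_def by (simp add: mw_hull finW neW finW' neW')
  thus "\<exists>T :: 'a set. int DIM('a) simplex T \<and> T \<subseteq> cball 0 1 \<and> mean_width (convex hull W) < mean_width T"
    using simpT Tb by blast
qed

theorem claim1p2:
  fixes V :: "'a::euclidean_space set"
  assumes dim: "DIM('a) \<ge> 2"
    and simp: "\<not> affine_dependent V" "card V = DIM('a) + 1"
    and inball: "convex hull V \<subseteq> cball 0 1"
    and maximal: "\<And>T :: 'a set. int DIM('a) simplex T \<Longrightarrow> T \<subseteq> cball 0 1 \<Longrightarrow>
                   mean_width T \<le> mean_width (convex hull V)"
  shows "(\<forall>x r. convex hull V \<subseteq> cball x r \<longrightarrow> 1 \<le> r)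
     \<and> (\<forall>v\<in>V. norm v = 1)
     \<and> sphere 0 1 \<subseteq> (\<Union>v\<in>V. {u. u \<bullet> v \<ge> 0})"
proof -
  have finV: "finite V" using simp(2) card.infinite by fastforce
  have neV: "V \<noteq> {}" using simp(2) by auto
  have B: "norm v = 1" if vV: "v \<in> V" for v
  proof (rule ccontr)
    assume ne: "norm v \<noteq> 1"
    have "v \<in> cball 0 1" using inball hull_inc[OF vV, of convex] by auto
    hence "norm v < 1" using ne by simp
    then obtain T :: "'a set" where "int DIM('a) simplex T" "T \<subseteq> cball 0 1" "mean_width (convex hull V) < mean_width T"
      using improve[OF simp inball vV] by blast
    thus False using maximal by fastforce
  qed
  have A: "1 \<le> r" if sub: "convex hull V \<subseteq> cball x r" for x r
  proof (rule ccontr)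
    assume "\<not> 1 \<le> r" hence r1: "r < 1" by simp
    define W where "W = (\<lambda>v. -x + v) ` V"
    have indW: "\<not> affine_dependent W"
      using simp(1) affine_dependent_translation_eq[of V "-x"] by (simp add: W_def)
    have cW: "card W = DIM('a) + 1" unfolding W_def using simp(2) by (simp add: card_image inj_on_def)
    have Wr: "norm w \<le> r" if "w \<in> W" for w
    proof -
      obtain v where v: "v \<in> V" "w = -x + v" using \<open>w \<in> W\<close> W_def by auto
      have "v \<in> cball x r" using sub hull_inc[OF v(1), of convex] by auto
      thus ?thesis using v by (simp add: dist_norm norm_minus_commute)
    qed
    have "W \<subseteq> cball 0 1" using Wr r1 by force
    hence Wb: "convex hull W \<subseteq> cball 0 1" by (intro hull_minimal convex_cball)
    obtain v0 where v0: "v0 \<in> V" using neV by auto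
    have w0: "-x + v0 \<in> W" "norm (-x + v0) < 1" using v0 Wr[of "-x + v0"] r1 by (auto simp: W_def)
    obtain T :: "'a set" where T: "int DIM('a) simplex T" "T \<subseteq> cball 0 1" "mean_width (convex hull W) < mean_width T"
      using improve[OF indW cW Wb w0] by blast
    have "mean_width (convex hull W) = mean_width (convex hull V)"
      unfolding W_def by (rule mw_translate[OF finV neV])
    thus False using T maximal by fastforce
  qed
  have C: "u \<in> (\<Union>v\<in>V. {u. u \<bullet> v \<ge> 0})" if u: "u \<in> sphere 0 1" for u
  proof (rule ccontr)
    assume "u \<notin> (\<Union>v\<in>V. {u. u \<bullet> v \<ge> 0})"
    hence neg: "u \<bullet> v < 0" if "v \<in> V" for v using that by force
    have nu: "norm u = 1" using u by simp
    define \<delta> where "\<delta> = Min ((\<lambda>v. - (u \<bullet> v)) ` V)"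
    have d0: "\<delta> > 0" unfolding \<delta>_def using finV neV neg by (subst Min_gr_iff) auto
    have dle: "\<delta> \<le> - (u \<bullet> v)" if "v \<in> V" for v unfolding \<delta>_def using finV that by (intro Min_le) auto
    obtain v0 where v0: "v0 \<in> V" using neV by auto
    have "- (u \<bullet> v0) \<le> norm u * norm v0" using Cauchy_Schwarz_ineq2[of u v0] by linarith
    hence d1: "\<delta> \<le> 1" using dle[OF v0] nu B[OF v0] by simp
    define x where "x = - (\<delta> *\<^sub>R u)"
    define r where "r = sqrt (1 - \<delta>^2)"
    have "V \<subseteq> cball x r"
    proof
      fix v assume vV: "v \<in> V"
      have "(norm (v + \<delta> *\<^sub>R u))^2 = (norm v)^2 + 2 * \<delta> * (u \<bullet> v) + \<delta>^2 * (norm u)^2"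
        unfolding power2_norm_eq_inner by (simp add: inner_add_left inner_add_right inner_commute algebra_simps power2_eq_square)
      also have "\<dots> = 1 + 2 * \<delta> * (u \<bullet> v) + \<delta>^2" using B[OF vV] nu by simp
      also have "\<dots> \<le> 1 - \<delta>^2"
      proof -
        have "\<delta> * (u \<bullet> v) \<le> \<delta> * (- \<delta>)" using dle[OF vV] d0 by (intro mult_left_mono) auto
        thus ?thesis by (simp add: power2_eq_square)
      qed
      finally have "norm (v + \<delta> *\<^sub>R u) \<le> r" unfolding r_def by (rule real_le_rsqrt)
      moreover have "dist x v = norm (v + \<delta> *\<^sub>R u)"
        unfolding x_def dist_norm by (metis minus_diff_eq norm_minus_cancel diff_minus_eq_add add.commute)
      ultimately show "v \<in> cball x r" by simp
    qed
    hence "convex hull V \<subseteq> cball x r" by (intro hull_minimal convex_cball)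
    hence "1 \<le> r" by (rule A)
    moreover have "r < 1" unfolding r_def using d0 by simp
    ultimately show False by simp
  qed
  show ?thesis using A B C by blast
qed

end
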